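(* Let $L=L(m,n;k,l)$ be an $L$-shaped supergrid graph with two distinct vertices $s$ and $t$. If $L$ has a Hamiltonian $(s,t)$-path, then none of the following holds: (F1) $s$ or $t$ is a cut vertex of $L$, or $\{s,t\}$ is a vertex cut of $L$; (F4) there is a vertex $w$ of $L$ with $\deg(w)=1$, $w\ne s$, $w\ne t$; (F5) $m-k=1$, $n-l=2$, $l=1$, $k\ge 2$, and $\{s,t\}=\{(1,2),(2,3)\}$ or $\{s,t\}=\{(1,3),(2,2)\}$.
   Context: The infinite supergrid graph has as vertices all points $(x,y)\in\mathbb{Z}^2$, two distinct vertices $u,v$ being adjacent iff $|u_x-v_x|\le 1$ and $|u_y-v_y|\le 1$. For integers $m,n>1$ and $k,l\ge 1$ with $m-k\ge 1$, $n-l\ge 1$, $L(m,n;k,l)$ is the subgraph induced by $\{(x,y):1\le x\le m,\ 1\le y\le n\}\setminus\{(x,y): m-k+1\le x\le m,\ 1\le y\le l\}$ ($(1,1)$ is the upper-left corner, $y$ increases downward). A vertex set $V_1$ is a vertex cut of a connected graph $G$ if $G-V_1$ is disconnected; $v$ is a cut vertex if $\{v\}$ is a vertex cut. A Hamiltonian $(s,t)$-path is a simple path from $s$ to $t$ visiting every vertex exactly once. *)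

theory Defs
  imports Main
begin

type_synonym vert = "int \<times> int"

definition sg_adj :: "vert \<Rightarrow> vert \<Rightarrow> bool" where
  "sg_adj u v \<longleftrightarrow> u \<noteq> v \<and> \<bar>fst u - fst v\<bar> \<le> 1 \<and> \<bar>snd u - snd v\<bar> \<le> 1"

definition Lshape :: "int \<Rightarrow> int \<Rightarrow> int \<Rightarrow> int \<Rightarrow> vert set" where
  "Lshape m n k l =
     {(x, y). 1 \<le> x \<and> x \<le> m \<and> 1 \<le> y \<and> y \<le> n}
     - {(x, y). m - k + 1 \<le> x \<and> x \<le> m \<and> 1 \<le> y \<and> y \<le> l}"

definition walk_in :: "vert set \<Rightarrow> vert list \<Rightarrow> bool" where
  "walk_in V p \<longleftrightarrow> p \<noteq> [] \<and> set p \<subseteq> V \<and>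
     (\<forall>i. Suc i < length p \<longrightarrow> sg_adj (p ! i) (p ! Suc i))"

text \<open>The subgraph induced by V is connected (the empty graph counts as connected).\<close>
definition induced_connected :: "vert set \<Rightarrow> bool" where
  "induced_connected V \<longleftrightarrow>
     (\<forall>u\<in>V. \<forall>v\<in>V. \<exists>p. walk_in V p \<and> hd p = u \<and> last p = v)"

definition vertex_cut :: "vert set \<Rightarrow> vert set \<Rightarrow> bool" where
  "vertex_cut V S \<longleftrightarrow> S \<subseteq> V \<and> \<not> induced_connected (V - S)"

definition cut_vertex :: "vert set \<Rightarrow> vert \<Rightarrow> bool" where
  "cut_vertex V v \<longleftrightarrow> vertex_cut V {v}"

definition sg_degree :: "vert set \<Rightarrow> vert \<Rightarrow> nat" where
  "sg_degree V w = card {u \<in> V. sg_adj w u}"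

definition ham_path :: "vert set \<Rightarrow> vert \<Rightarrow> vert \<Rightarrow> bool" where
  "ham_path V s t \<longleftrightarrow>
     (\<exists>p. walk_in V p \<and> distinct p \<and> set p = V \<and> hd p = s \<and> last p = t)"

end

theory Submission
  imports Defs
begin

lemma sg_adj_sym: "sg_adj u v \<Longrightarrow> sg_adj v u"
  unfolding sg_adj_def by (auto simp: abs_minus_commute)

lemma walk_mono: "walk_in A q \<Longrightarrow> set q \<subseteq> B \<Longrightarrow> walk_in B q"
  unfolding walk_in_def by auto

lemma walk_sub:
  assumes "walk_in A q" "ys = take j (drop i q)" "ys \<noteq> []"
  shows "walk_in (set ys) ys"
proof -
  have "\<forall>x. Suc x < length ys \<longrightarrow> sg_adj (ys ! x) (ys ! Suc x)"
  proof (intro allI impI)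
    fix x assume "Suc x < length ys"
    hence "Suc (i + x) < length q" "ys ! x = q ! (i+x)" "ys ! Suc x = q ! Suc (i+x)"
      using assms(2) by auto
    thus "sg_adj (ys ! x) (ys ! Suc x)" using assms(1) unfolding walk_in_def by auto
  qed
  thus ?thesis using assms(3) unfolding walk_in_def by auto
qed

lemma walk_rev: "walk_in A q \<Longrightarrow> walk_in A (rev q)"
proof -
  assume a: "walk_in A q"
  have "\<forall>x. Suc x < length (rev q) \<longrightarrow> sg_adj (rev q ! x) (rev q ! Suc x)"
  proof (intro allI impI)
    fix x assume h: "Suc x < length (rev q)"
    define y where "y = length q - Suc (Suc x)"
    have "Suc y < length q" "rev q ! x = q ! Suc y" "rev q ! Suc x = q ! y"
      using h by (auto simp: rev_nth y_def Suc_diff_Suc)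
    thus "sg_adj (rev q ! x) (rev q ! Suc x)" using a sg_adj_sym unfolding walk_in_def by auto
  qed
  thus ?thesis using a unfolding walk_in_def by auto
qed

lemma seg:
  assumes "walk_in A q" "i \<le> j" "j < length q"
  shows "\<exists>r. walk_in (set q) r \<and> hd r = q ! i \<and> last r = q ! j"
proof -
  define r where "r = take (j - i + 1) (drop i q)"
  have ne: "r \<noteq> []" using assms unfolding r_def by auto
  have w: "walk_in (set r) r" using walk_sub[OF assms(1) r_def ne] .
  have sub: "set r \<subseteq> set q" unfolding r_def
    by (meson set_drop_subset set_take_subset subset_trans)
  have "hd r = q ! i" using assms unfolding r_def by (simp add: hd_conv_nth)
  moreover have "last r = q ! j"
  proof -
    have l: "length r = j - i + 1" using assms unfolding r_def by auto
    have "last r = r ! (j - i)" using ne l by (simp add: last_conv_nth)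
    also have "\<dots> = q ! j" using assms unfolding r_def by auto
    finally show ?thesis .
  qed
  ultimately show ?thesis using walk_mono[OF w sub] by blast
qed

lemma walk_conn:
  assumes "walk_in A q"
  shows "induced_connected (set q)"
  unfolding induced_connected_def
proof (intro ballI)
  fix u v assume "u \<in> set q" "v \<in> set q"
  then obtain i j where ij: "i < length q" "j < length q" "q ! i = u" "q ! j = v"
    by (metis in_set_conv_nth)
  show "\<exists>p. walk_in (set q) p \<and> hd p = u \<and> last p = v"
  proof (cases "i \<le> j")
    case True thus ?thesis using seg[OF assms True ij(2)] ij by blast
  next
    case False
    then obtain r where r: "walk_in (set q) r" "hd r = q ! j" "last r = q ! i"
      using seg[OF assms _ ij(1), of j] by auto
    have ne: "r \<noteq> []" using r(1) unfolding walk_in_def by auto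
    have "walk_in (set q) (rev r)" using walk_rev[OF r(1)] .
    moreover have "hd (rev r) = u" "last (rev r) = v" using r ij ne
      by (auto simp: hd_rev last_rev)
    ultimately show ?thesis by blast
  qed
qed

lemma sub_conn:
  assumes "walk_in A q" "ys = take j (drop i q)"
  shows "induced_connected (set ys)"
proof (cases "ys = []")
  case True thus ?thesis unfolding induced_connected_def by auto
next
  case False thus ?thesis using walk_conn[OF walk_sub[OF assms False]] by simp
qed

lemma F1:
  assumes "walk_in V p" "distinct p" "set p = V" "hd p = s" "last p = t" "s \<noteq> t"
  shows "induced_connected (V - {s})" "induced_connected (V - {t})"
        "induced_connected (V - {s,t})"
proof -
  have ne: "p \<noteq> []" using assms(1) unfolding walk_in_def by auto
  obtain x xs where p: "p = x # xs" using ne by (cases p) auto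
  have xs: "xs \<noteq> []" using assms p by auto
  obtain ys y where xs2: "xs = ys @ [y]" using xs by (metis rev_exhaust)
  have "V - {s} = set (take (length p) (drop 1 p))"
    using assms p by auto
  thus "induced_connected (V - {s})" using sub_conn[OF assms(1)] by metis
  have "V - {t} = set (take (length p - 1) (drop 0 p))"
    using assms p xs2 by auto
  thus "induced_connected (V - {t})" using sub_conn[OF assms(1)] by metis
  have "V - {s,t} = set (take (length p - 2) (drop 1 p))"
    using assms p xs2 by auto
  thus "induced_connected (V - {s,t})" using sub_conn[OF assms(1)] by metis
qed

lemma F4:
  assumes "walk_in V p" "distinct p" "set p = V" "hd p = s" "last p = t"
    "w \<in> V" "w \<noteq> s" "w \<noteq> t"
  shows "sg_degree V w \<noteq> 1"
proof
  assume c: "sg_degree V w = 1"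
  obtain i where i: "i < length p" "p ! i = w" using assms by (metis in_set_conv_nth)
  have ne: "p \<noteq> []" using assms(1) unfolding walk_in_def by auto
  have "i \<noteq> 0" using i assms ne by (metis hd_conv_nth)
  moreover have "i \<noteq> length p - 1" using i assms ne by (metis last_conv_nth)
  ultimately obtain j where j: "i = Suc j" "Suc i < length p" using i
    by (metis Suc_lessI diff_Suc_1 not0_implies_Suc)
  have "sg_adj (p ! j) w" using assms(1) i j unfolding walk_in_def by auto
  hence a1: "sg_adj w (p ! j)" by (rule sg_adj_sym)
  have a2: "sg_adj w (p ! Suc i)" using assms(1) i j unfolding walk_in_def by auto
  have m: "p ! j \<in> V" "p ! Suc i \<in> V" using assms(3) i j by auto
  have d: "p ! j \<noteq> p ! Suc i" using assms(2) j nth_eq_iff_index_eq by fastforce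
  have "p ! j \<in> {u \<in> V. sg_adj w u}" "p ! Suc i \<in> {u \<in> V. sg_adj w u}"
    using a1 a2 m by auto
  moreover obtain z where "{u \<in> V. sg_adj w u} = {z}" using c unfolding sg_degree_def
    by (metis card_1_singletonE)
  ultimately show False using d by auto
qed

lemma caseA:
 assumes "vv = 0" "zz = N - 1" "uu \<noteq> 0" "uu \<noteq> N - 1" "uu \<noteq> vv" "ww \<noteq> vv" "ww \<noteq> uu" "ww \<noteq> yy" "ww \<noteq> zz" "uu \<noteq> yy"
 "(N::nat) \<ge> 7" "uu < N" "ww < N"
 "Suc uu < N \<Longrightarrow> Suc uu = vv \<or> Suc uu = yy"
 "uu = Suc (uu - 1) \<Longrightarrow> uu - 1 = vv \<or> uu - 1 = yy"
 "Suc ww < N \<Longrightarrow> Suc ww = vv \<or> Suc ww = yy \<or> Suc ww = zz"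
 "ww = Suc (ww - 1) \<Longrightarrow> ww - 1 = vv \<or> ww - 1 = yy \<or> ww - 1 = zz"
 shows False
proof -
  have "Suc uu = yy" using assms(1-5,12,14) by linarith
  moreover have "uu = 1" using assms(1-5,12,15) calculation by (cases uu) auto
  ultimately have "ww = 3" using assms(1-2,6-9,13,17) by (cases ww) auto
  thus False using assms(1,2,11,16) \<open>Suc uu = yy\<close> \<open>uu = 1\<close> by auto
qed

lemma caseB:
 assumes "zz = 0" "vv = N - 1" "uu \<noteq> 0" "uu \<noteq> N - 1" "uu \<noteq> vv" "ww \<noteq> vv" "ww \<noteq> uu" "ww \<noteq> yy" "ww \<noteq> zz" "uu \<noteq> yy"
 "(N::nat) \<ge> 7" "uu < N" "ww < N"
 "Suc uu < N \<Longrightarrow> Suc uu = vv \<or> Suc uu = yy"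
 "uu = Suc (uu - 1) \<Longrightarrow> uu - 1 = vv \<or> uu - 1 = yy"
 "Suc ww < N \<Longrightarrow> Suc ww = vv \<or> Suc ww = yy \<or> Suc ww = zz"
 "ww = Suc (ww - 1) \<Longrightarrow> ww - 1 = vv \<or> ww - 1 = yy \<or> ww - 1 = zz"
 shows False
proof -
  have "uu - 1 = yy" using assms(1-5,12,15) by (cases uu) auto
  moreover have "Suc uu = N - 1" using assms(1-5,12,14) calculation by (cases uu) auto
  ultimately have "Suc ww = N - 3" using assms(1-2,6-9,11,13,16) by (cases ww) auto
  thus False using assms(1,2,6-9,11,17) \<open>uu - 1 = yy\<close> \<open>Suc uu = N - 1\<close> by (cases ww) auto
qed
lemma caseC:
 assumes "ww = 0" "yy = N - 1" "uu \<noteq> 0" "uu \<noteq> N - 1" "uu \<noteq> vv" "ww \<noteq> vv" "ww \<noteq> uu" "ww \<noteq> yy" "ww \<noteq> zz" "uu \<noteq> yy"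
 "vv \<noteq> yy" "vv \<noteq> zz" "yy \<noteq> zz" "uu \<noteq> zz"
 "(N::nat) \<ge> 7" "uu < N" "vv < N"
 "Suc uu < N \<Longrightarrow> Suc uu = vv \<or> Suc uu = yy"
 "uu = Suc (uu - 1) \<Longrightarrow> uu - 1 = vv \<or> uu - 1 = yy"
 "vv = Suc (vv - 1) \<Longrightarrow> vv - 1 = uu \<or> vv - 1 = ww \<or> vv - 1 = yy \<or> vv - 1 = zz"
 "Suc ww < N \<Longrightarrow> Suc ww = vv \<or> Suc ww = yy \<or> Suc ww = zz"
 shows False
proof -
  have "uu - 1 = vv" using assms(1-5,16,19) by (cases uu) auto
  moreover have "Suc uu = N - 1" using assms(1-5,16,18) calculation by (cases uu) auto
  ultimately have "vv - 1 = zz" using assms(1-2,5-6,11-12,14,15,20) by (cases vv) auto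
  thus False using assms(1,2,15,21) \<open>uu - 1 = vv\<close> \<open>Suc uu = N - 1\<close> by auto
qed
lemma caseD:
 assumes "ww = N - 1" "yy = 0" "uu \<noteq> 0" "uu \<noteq> N - 1" "uu \<noteq> vv" "ww \<noteq> vv" "ww \<noteq> uu" "ww \<noteq> yy" "ww \<noteq> zz" "uu \<noteq> yy"
 "vv \<noteq> yy" "vv \<noteq> zz" "yy \<noteq> zz" "uu \<noteq> zz"
 "(N::nat) \<ge> 7" "uu < N" "vv < N"
 "Suc uu < N \<Longrightarrow> Suc uu = vv \<or> Suc uu = yy"
 "uu = Suc (uu - 1) \<Longrightarrow> uu - 1 = vv \<or> uu - 1 = yy"
 "Suc vv < N \<Longrightarrow> Suc vv = uu \<or> Suc vv = ww \<or> Suc vv = yy \<or> Suc vv = zz"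
 "ww = Suc (ww - 1) \<Longrightarrow> ww - 1 = vv \<or> ww - 1 = yy \<or> ww - 1 = zz"
 shows False
proof -
  have "uu = 1" using assms(1-5,16,18,19) by (cases uu) auto
  moreover have "vv = 2" using assms(1-5,16,18) calculation by auto
  ultimately have "zz = 3" using assms(1-2,5-6,11-12,14,15,20) by auto
  moreover have "ww = Suc (ww - 1)" using assms(1,15) by arith
  ultimately have "ww - 1 = 2 \<or> ww - 1 = 0 \<or> ww - 1 = 3" using assms(2,21) \<open>vv = 2\<close> by auto
  thus False using assms(1,15) by arith
qed
lemma F5:
  fixes k :: int
  assumes V: "V = Lshape (k+1) 3 k 1" and k: "k \<ge> 2"
    and w: "walk_in V p" "distinct p" "set p = V"
    and e: "{hd p, last p} = {(1, 2), (2, 3)} \<or> {hd p, last p} = {(1, 3), (2, 2)}"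
  shows False
proof -
  have mem: "\<And>x y. (x, y) \<in> V \<longleftrightarrow> 1 \<le> x \<and> x \<le> k+1 \<and> 1 \<le> y \<and> y \<le> 3 \<and> \<not> (2 \<le> x \<and> y = 1)"
    using k unfolding V Lshape_def by auto
  define N where "N = length p"
  have ne: "p \<noteq> []" using w unfolding walk_in_def by auto
  have "{(1,1),(1,2),(1,3),(2,2),(2,3),(3,2),(3,3)} \<subseteq> set p" using w(3) mem k by auto
  hence "card {(1::int,1::int),(1,2),(1,3),(2,2),(2,3),(3,2),(3,3)} \<le> card (set p)"
    by (intro card_mono) auto
  also have "\<dots> \<le> N" unfolding N_def by (rule card_length)
  finally have N7: "N \<ge> 7" by simp
  have ix: "\<And>v. v \<in> V \<Longrightarrow> \<exists>i<N. p ! i = v" using w(3) unfolding N_def by (metis in_set_conv_nth)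
  have un: "\<And>i j. i < N \<Longrightarrow> j < N \<Longrightarrow> p ! i = p ! j \<Longrightarrow> i = j"
    using w(2) nth_eq_iff_index_eq unfolding N_def by blast
  have "(1,1) \<in> V" using k by (simp add: mem)
  then obtain a1 where a1: "a1 < N" "p ! a1 = (1,1)" using ix by blast
  have "(1,2) \<in> V" using k by (simp add: mem)
  then obtain a2 where a2: "a2 < N" "p ! a2 = (1,2)" using ix by blast
  have "(1,3) \<in> V" using k by (simp add: mem)
  then obtain a3 where a3: "a3 < N" "p ! a3 = (1,3)" using ix by blast
  have "(2,2) \<in> V" using k by (simp add: mem)
  then obtain b2 where b2: "b2 < N" "p ! b2 = (2,2)" using ix by blast
  have "(2,3) \<in> V" using k by (simp add: mem)
  then obtain b3 where b3: "b3 < N" "p ! b3 = (2,3)" using ix by blast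
  have nb: "\<And>i. Suc i < N \<Longrightarrow> sg_adj (p ! i) (p ! Suc i) \<and> sg_adj (p ! Suc i) (p ! i) \<and> p ! i \<in> V \<and> p ! Suc i \<in> V"
  proof -
    fix i assume h: "Suc i < N"
    have 1: "sg_adj (p ! i) (p ! Suc i)" using w h unfolding walk_in_def N_def by auto
    have "p ! i \<in> V" "p ! Suc i \<in> V" using w(3) h unfolding N_def by auto
    thus "sg_adj (p ! i) (p ! Suc i) \<and> sg_adj (p ! Suc i) (p ! i) \<and> p ! i \<in> V \<and> p ! Suc i \<in> V"
      using 1 sg_adj_sym by blast
  qed
  have n11: "\<And>u. u \<in> V \<Longrightarrow> sg_adj (1,1) u \<Longrightarrow> u = (1,2) \<or> u = (2,2)"
    apply (case_tac u) unfolding sg_adj_def by (auto simp: mem abs_le_iff)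
  have n12: "\<And>u. u \<in> V \<Longrightarrow> sg_adj (1,2) u \<Longrightarrow> u = (1,1) \<or> u = (1,3) \<or> u = (2,2) \<or> u = (2,3)"
    apply (case_tac u) unfolding sg_adj_def by (auto simp: mem abs_le_iff)
  have n13: "\<And>u. u \<in> V \<Longrightarrow> sg_adj (1,3) u \<Longrightarrow> u = (1,2) \<or> u = (2,2) \<or> u = (2,3)"
    apply (case_tac u) unfolding sg_adj_def by (auto simp: mem abs_le_iff)
  have c1: "Suc a1 < N \<Longrightarrow> Suc a1 = a2 \<or> Suc a1 = b2"
  proof -
    assume h: "Suc a1 < N"
    have "p ! Suc a1 = (1,2) \<or> p ! Suc a1 = (2,2)" using nb[OF h] a1 n11 by auto
    thus ?thesis using un[OF h a2(1)] un[OF h b2(1)] a2 b2 by auto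
  qed
  have c1': "a1 = Suc j \<Longrightarrow> j = a2 \<or> j = b2" for j
  proof -
    assume e: "a1 = Suc j"
    have h: "Suc j < N" using e a1 by simp
    have h': "j < N" using h by simp
    have "sg_adj (p ! Suc j) (p ! j)" "p ! j \<in> V" using nb[OF h] by auto
    hence "p ! j = (1,2) \<or> p ! j = (2,2)" using a1 e n11 by auto
    thus ?thesis using un[OF h' a2(1)] un[OF h' b2(1)] a2 b2 by auto
  qed
  have c2: "Suc a2 < N \<Longrightarrow> Suc a2 = a1 \<or> Suc a2 = a3 \<or> Suc a2 = b2 \<or> Suc a2 = b3"
  proof -
    assume h: "Suc a2 < N"
    have "p ! Suc a2 = (1,1) \<or> p ! Suc a2 = (1,3) \<or> p ! Suc a2 = (2,2) \<or> p ! Suc a2 = (2,3)" using nb[OF h] a2 n12 by auto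
    thus ?thesis using un[OF h a1(1)] un[OF h a3(1)] un[OF h b2(1)] un[OF h b3(1)] a1 a3 b2 b3 by auto
  qed
  have c2': "a2 = Suc j \<Longrightarrow> j = a1 \<or> j = a3 \<or> j = b2 \<or> j = b3" for j
  proof -
    assume e: "a2 = Suc j"
    have h: "Suc j < N" using e a2 by simp
    have h': "j < N" using h by simp
    have "sg_adj (p ! Suc j) (p ! j)" "p ! j \<in> V" using nb[OF h] by auto
    hence "p ! j = (1,1) \<or> p ! j = (1,3) \<or> p ! j = (2,2) \<or> p ! j = (2,3)" using a2 e n12 by auto
    thus ?thesis using un[OF h' a1(1)] un[OF h' a3(1)] un[OF h' b2(1)] un[OF h' b3(1)] a1 a3 b2 b3 by auto
  qed
  have c3: "Suc a3 < N \<Longrightarrow> Suc a3 = a2 \<or> Suc a3 = b2 \<or> Suc a3 = b3"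
  proof -
    assume h: "Suc a3 < N"
    have "p ! Suc a3 = (1,2) \<or> p ! Suc a3 = (2,2) \<or> p ! Suc a3 = (2,3)" using nb[OF h] a3 n13 by auto
    thus ?thesis using un[OF h a2(1)] un[OF h b2(1)] un[OF h b3(1)] a2 b2 b3 by auto
  qed
  have c3': "a3 = Suc j \<Longrightarrow> j = a2 \<or> j = b2 \<or> j = b3" for j
  proof -
    assume e: "a3 = Suc j"
    have h: "Suc j < N" using e a3 by simp
    have h': "j < N" using h by simp
    have "sg_adj (p ! Suc j) (p ! j)" "p ! j \<in> V" using nb[OF h] by auto
    hence "p ! j = (1,2) \<or> p ! j = (2,2) \<or> p ! j = (2,3)" using a3 e n13 by auto
    thus ?thesis using un[OF h' a2(1)] un[OF h' b2(1)] un[OF h' b3(1)] a2 b2 b3 by auto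
  qed
  have hd: "hd p = p ! 0" using ne by (simp add: hd_conv_nth)
  have lt: "last p = p ! (N - 1)" using ne unfolding N_def by (simp add: last_conv_nth)
  have d: "a1 \<noteq> a2" "a1 \<noteq> a3" "a1 \<noteq> b2" "a1 \<noteq> b3" "a2 \<noteq> a3" "a2 \<noteq> b2" "a2 \<noteq> b3"
    "a3 \<noteq> b2" "a3 \<noteq> b3" "b2 \<noteq> b3" using a1 a2 a3 b2 b3 by auto
  have z: "\<And>v i. i < N \<Longrightarrow> p ! i = v \<Longrightarrow> p ! 0 = v \<Longrightarrow> i = 0"
    using un N7 by (metis gr_zeroI less_le_trans zero_less_numeral)
  have z': "\<And>v i. i < N \<Longrightarrow> p ! i = v \<Longrightarrow> p ! (N-1) = v \<Longrightarrow> i = N - 1"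
  proof -
    fix v i assume "i < N" "p ! i = v" "p ! (N-1) = v"
    moreover have "N - 1 < N" using N7 by simp
    ultimately show "i = N - 1" using un by metis
  qed
  have nz1: "a1 \<noteq> 0" "a1 \<noteq> N - 1" and nz3: "a3 = 0 \<or> a3 = N - 1 \<or> (a3 \<noteq> 0 \<and> a3 \<noteq> N - 1)"
    and ends: "(a2 = 0 \<and> b3 = N - 1) \<or> (a2 = N - 1 \<and> b3 = 0) \<or> (a3 = 0 \<and> b2 = N - 1) \<or> (a3 = N - 1 \<and> b2 = 0)"
  proof -
    have E: "(p ! 0 = (1,2) \<and> p ! (N-1) = (2,3)) \<or> (p ! 0 = (2,3) \<and> p ! (N-1) = (1,2))
      \<or> (p ! 0 = (1,3) \<and> p ! (N-1) = (2,2)) \<or> (p ! 0 = (2,2) \<and> p ! (N-1) = (1,3))"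
      using e unfolding hd lt by (auto simp: doubleton_eq_iff)
    show "a1 \<noteq> 0" using E a1 by (cases "a1 = 0") auto
    show "a1 \<noteq> N - 1" using E a1 by (cases "a1 = N - 1") auto
    show "a3 = 0 \<or> a3 = N - 1 \<or> (a3 \<noteq> 0 \<and> a3 \<noteq> N - 1)" by blast
    show "(a2 = 0 \<and> b3 = N - 1) \<or> (a2 = N - 1 \<and> b3 = 0) \<or> (a3 = 0 \<and> b2 = N - 1) \<or> (a3 = N - 1 \<and> b2 = 0)"
      using E z[OF a2] z[OF b3] z[OF a3] z[OF b2] z'[OF a2] z'[OF b3] z'[OF a3] z'[OF b2] by blast
  qed
  have ds: "a2 \<noteq> a1" "a3 \<noteq> a1" "b2 \<noteq> a1" "b3 \<noteq> a1" "a3 \<noteq> a2" "b2 \<noteq> a2" "b3 \<noteq> a2"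
    "b2 \<noteq> a3" "b3 \<noteq> a3" "b3 \<noteq> b2" using d by auto
  have A: False if "a2 = 0" "b3 = N - 1"
    by (rule caseA[where uu=a1 and vv=a2 and ww=a3 and yy=b2 and zz=b3 and N=N]) (assumption | rule that nz1 d N7 a1(1) a2(1) a3(1) c1 c1'[of "a1-1"] c2 c2'[of "a2-1"] c3 c3'[of "a3-1"] ds)+
  have B: False if "b3 = 0" "a2 = N - 1"
    by (rule caseB[where uu=a1 and vv=a2 and ww=a3 and yy=b2 and zz=b3 and N=N]) (assumption | rule that nz1 d N7 a1(1) a2(1) a3(1) c1 c1'[of "a1-1"] c2 c2'[of "a2-1"] c3 c3'[of "a3-1"] ds)+
  have C: False if "a3 = 0" "b2 = N - 1"
    by (rule caseC[where uu=a1 and vv=a2 and ww=a3 and yy=b2 and zz=b3 and N=N]) (assumption | rule that nz1 d N7 a1(1) a2(1) a3(1) c1 c1'[of "a1-1"] c2 c2'[of "a2-1"] c3 c3'[of "a3-1"] ds)+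
  have D: False if "a3 = N - 1" "b2 = 0"
    by (rule caseD[where uu=a1 and vv=a2 and ww=a3 and yy=b2 and zz=b3 and N=N]) (assumption | rule that nz1 d N7 a1(1) a2(1) a3(1) c1 c1'[of "a1-1"] c2 c2'[of "a2-1"] c3 c3'[of "a3-1"] ds)+
  show False using ends A B C D by blast
qed

theorem lemma7:
  fixes m n k l :: int and s t :: vert
  assumes "m > 1" and "n > 1" and "k \<ge> 1" and "l \<ge> 1"
    and "m - k \<ge> 1" and "n - l \<ge> 1"
    and "s \<in> Lshape m n k l" and "t \<in> Lshape m n k l" and "s \<noteq> t"
    and "ham_path (Lshape m n k l) s t"
  shows "\<not> (cut_vertex (Lshape m n k l) s \<or> cut_vertex (Lshape m n k l) t
              \<or> vertex_cut (Lshape m n k l) {s, t})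
       \<and> \<not> (\<exists>w \<in> Lshape m n k l. sg_degree (Lshape m n k l) w = 1 \<and> w \<noteq> s \<and> w \<noteq> t)
       \<and> \<not> (m - k = 1 \<and> n - l = 2 \<and> l = 1 \<and> k \<ge> 2 \<and>
              ({s, t} = {(1, 2), (2, 3)} \<or> {s, t} = {(1, 3), (2, 2)}))"
proof -
  let ?V = "Lshape m n k l"
  obtain p where p: "walk_in ?V p" "distinct p" "set p = ?V" "hd p = s" "last p = t"
    using assms(10) unfolding ham_path_def by blast
  note f1 = F1[OF p assms(9)]
  have A: "\<not> (cut_vertex ?V s \<or> cut_vertex ?V t \<or> vertex_cut ?V {s, t})"
    using f1 unfolding cut_vertex_def vertex_cut_def by auto
  have B: "\<not> (\<exists>w \<in> ?V. sg_degree ?V w = 1 \<and> w \<noteq> s \<and> w \<noteq> t)"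
    using F4[OF p] by blast
  have C: "\<not> (m - k = 1 \<and> n - l = 2 \<and> l = 1 \<and> k \<ge> 2 \<and>
              ({s, t} = {(1, 2), (2, 3)} \<or> {s, t} = {(1, 3), (2, 2)}))"
  proof
    assume h: "m - k = 1 \<and> n - l = 2 \<and> l = 1 \<and> k \<ge> 2 \<and>
              ({s, t} = {(1, 2), (2, 3)} \<or> {s, t} = {(1, 3), (2, 2)})"
    have "m = k + 1" "n = 3" "l = 1" using h by auto
    hence V: "?V = Lshape (k+1) 3 k 1" by simp
    show False
      by (rule F5[OF V]) (use h p in auto)
  qed
  show ?thesis using A B C by blast
qed

end
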